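(* Let $A\subseteq\mathbb R^2$ be measurable and let $\gamma\in\mathbb R\setminus\{0,-1\}$. Let $\lambda,\eta:A\to(0,\infty)$ be intensity functions with $\int_A\lambda$, $\int_A\eta$, $\int_A\lambda^{\gamma+1}$, $\int_A\eta^{\gamma+1}$ and $\int_A\lambda\eta^\gamma$ all finite, and let $P$ and $Q$ be the distributions of the Poisson point processes on $A$ with intensities $\lambda$ and $\eta$, with densities $p,q$ as described in the context. Define the log $\gamma$-divergence $$\Delta_\gamma(P,Q)=-\frac1\gamma\log\frac{\mathbb E_P[q(\Xi)^\gamma]}{\{\mathbb E_Q[q(\Xi)^\gamma]\}^{\gamma/(\gamma+1)}\{\mathbb E_P[p(\Xi)^\gamma]\}^{1/(\gamma+1)}}$$ and the $\beta$-divergence between intensity functions $$D_\beta(\lambda,\eta)=-\frac1\beta\int_A\Big\{\lambda(s)\eta(s)^\beta-\frac{\beta}{\beta+1}\eta(s)^{\beta+1}-\frac{1}{\beta+1}\lambda(s)^{\beta+1}\Big\}\mathrm ds.$$ Then $\Delta_\gamma(P,Q)=D_\beta(\lambda,\eta)$ when $\beta=\gamma$.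
   Context: A Poisson point process on $A$ with intensity $\lambda$ (with $\Lambda=\int_A\lambda(s)\mathrm ds<\infty$) is the random pair $\Xi=(M,\{S_1,\dots,S_M\})$ where $M\sim\mathrm{Poisson}(\Lambda)$ and, given $M=m$, $S_1,\dots,S_m$ are i.i.d. with density $\lambda(s)/\Lambda$ on $A$. Its density at $\xi=(m,\{s_1,\dots,s_m\})$ is $p(\xi)=\exp(-\Lambda)\prod_{i=1}^m\lambda(s_i)$, in the sense that for any suitable $g$, $\mathbb E_P[g(\Xi)]=\sum_{m=0}^\infty\frac{1}{m!}\int_{A^m}g(m,\{s_1,\dots,s_m\})\,p(m,\{s_1,\dots,s_m\})\,\mathrm ds_1\cdots\mathrm ds_m$. Similarly $q(\xi)=\exp(-H)\prod_{i=1}^m\eta(s_i)$ with $H=\int_A\eta$. *)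

theory Defs
  imports "HOL-Analysis.Analysis"
begin

type_synonym point = "real \<times> real"
type_synonym config = "nat \<times> point set"

definition total_intensity :: "point set \<Rightarrow> (point \<Rightarrow> real) \<Rightarrow> real" where
  "total_intensity A l = (LINT s:A|lborel. l s)"

definition ppp_density :: "point set \<Rightarrow> (point \<Rightarrow> real) \<Rightarrow> config \<Rightarrow> real" where
  "ppp_density A l \<xi> = exp (- total_intensity A l) * (\<Prod>s\<in>snd \<xi>. l s)"

definition ppp_expect :: "point set \<Rightarrow> (point \<Rightarrow> real) \<Rightarrow> (config \<Rightarrow> real) \<Rightarrow> real" where
  "ppp_expect A l g =
     (\<Sum>m. (1 / fact m) *
        (\<integral>x. g (m, x ` {..<m}) * ppp_density A l (m, x ` {..<m})
           \<partial>(PiM {..<m} (\<lambda>_. restrict_space lborel A))))"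

definition log_gamma_div :: "real \<Rightarrow> point set \<Rightarrow> (point \<Rightarrow> real) \<Rightarrow> (point \<Rightarrow> real) \<Rightarrow> real" where
  "log_gamma_div \<gamma> A l e =
     - (1 / \<gamma>) * ln (ppp_expect A l (\<lambda>\<xi>. ppp_density A e \<xi> powr \<gamma>) /
        ((ppp_expect A e (\<lambda>\<xi>. ppp_density A e \<xi> powr \<gamma>)) powr (\<gamma> / (\<gamma> + 1)) *
         (ppp_expect A l (\<lambda>\<xi>. ppp_density A l \<xi> powr \<gamma>)) powr (1 / (\<gamma> + 1))))"

definition beta_div :: "real \<Rightarrow> point set \<Rightarrow> (point \<Rightarrow> real) \<Rightarrow> (point \<Rightarrow> real) \<Rightarrow> real" where
  "beta_div \<beta> A l e =
     - (1 / \<beta>) * (LINT s:A|lborel. (l s * e s powr \<beta> - \<beta> / (\<beta> + 1) * e s powr (\<beta> + 1)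
                                     - 1 / (\<beta> + 1) * l s powr (\<beta> + 1)))"

end

theory Submission
  imports Defs
begin

lemma powr_helper:
  "exp (- T) powr \<gamma> * (\<Prod>s\<in>X. (e::real\<times>real\<Rightarrow>real) s) powr \<gamma> = exp (- \<gamma> * T) * (\<Prod>s\<in>X. e s powr \<gamma>)"
  by (subst prod_powr_distrib, subst exp_powr_real, simp add: mult.commute)

lemma prod_image_first:
  fixes x :: "nat \<Rightarrow> 'a" and f :: "'a \<Rightarrow> real"
  shows "(\<Prod>s\<in>x ` {..<m}. f s) = (\<Prod>i<m. if \<exists>j<i. x j = x i then 1 else f (x i))"
proof (induction m)
  case 0 then show ?case by simp
next
  case (Suc m)
  show ?case
  proof (cases "x m \<in> x ` {..<m}")
    case True
    then have "x ` {..<Suc m} = x ` {..<m}" by (auto simp: lessThan_Suc)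
    moreover have "\<exists>j<m. x j = x m" using True by force
    ultimately show ?thesis using Suc by (simp add: lessThan_Suc)
  next
    case False
    then have "x ` {..<Suc m} = insert (x m) (x ` {..<m})" by (auto simp: lessThan_Suc)
    moreover have "\<not>(\<exists>j<m. x j = x m)" using False by (metis image_eqI lessThan_iff)
    ultimately have h1: "(\<Prod>s\<in>x ` {..<Suc m}. f s) = f (x m) * (\<Prod>s\<in>x ` {..<m}. f s)"
      using False by simp
    have h2: "(\<Prod>i<Suc m. if \<exists>j<i. x j = x i then 1 else f (x i))
       = (if \<exists>j<m. x j = x m then 1 else f (x m)) * (\<Prod>i<m. if \<exists>j<i. x j = x i then 1 else f (x i))"
      by (simp only: prod.lessThan_Suc mult.commute)
    have h3: "(if \<exists>j<m. x j = x m then 1 else f (x m)) = f (x m)"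
      using \<open>\<not>(\<exists>j<m. x j = x m)\<close> by (rule if_not_P)
    show ?thesis by (simp only: h1 h2 h3 Suc.IH)
  qed
qed

context
  fixes A :: "(real \<times> real) set"
  assumes A: "A \<in> sets lborel"
begin

lemma sfM: "sigma_finite_measure (restrict_space lborel A)"
  by (rule sigma_finite_measure_restrict_space[OF _ A]) (rule lborel.sigma_finite_measure_axioms)

lemma psf: "product_sigma_finite (\<lambda>_::nat. restrict_space lborel A)"
  unfolding product_sigma_finite_def using sfM by simp

lemma meas_eq:
  "{x \<in> space (PiM I (\<lambda>_::nat. restrict_space lborel A)). x j = x i} \<in> sets (PiM I (\<lambda>_::nat. restrict_space lborel A))"
  if "i \<in> I" "j \<in> I"
proof -
  have idm: "(\<lambda>y. y) \<in> borel_measurable (restrict_space lborel A)"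
    by (rule measurable_restrict_space1) simp
  have "(\<lambda>x. x k) \<in> borel_measurable (PiM I (\<lambda>_::nat. restrict_space lborel A))" if "k \<in> I" for k
    using measurable_comp[OF measurable_component_singleton[OF that, of "\<lambda>_. restrict_space lborel A"] idm]
    by (simp add: o_def)
  with that show ?thesis by (intro measurable_equality_set) auto
qed

lemma null_eq:
  assumes "i < m" "j < m" "i \<noteq> j"
  shows "emeasure (PiM {..<m} (\<lambda>_::nat. restrict_space lborel A))
     {x \<in> space (PiM {..<m} (\<lambda>_::nat. restrict_space lborel A)). x j = x i} = 0"
proof -
  interpret product_sigma_finite "\<lambda>_::nat. restrict_space lborel A" by (rule psf)
  let ?M = "restrict_space lborel A"
  define I' where "I' = {..<m} - {i}"
  have ins: "{..<m} = insert i I'" using assms unfolding I'_def by auto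
  have fin: "finite I'" "i \<notin> I'" "j \<in> I'" using assms unfolding I'_def by auto
  define N where "N = {x \<in> space (PiM {..<m} (\<lambda>_::nat. ?M)). x j = x i}"
  have Nm: "N \<in> sets (PiM (insert i I') (\<lambda>_::nat. ?M))"
    unfolding N_def ins[symmetric] using meas_eq assms by auto
  have "emeasure (PiM {..<m} (\<lambda>_. ?M)) N = (\<integral>\<^sup>+ x. indicator N x \<partial>PiM (insert i I') (\<lambda>_. ?M))"
    using Nm ins by simp
  also have "\<dots> = (\<integral>\<^sup>+ x. (\<integral>\<^sup>+ y. indicator N (x(i := y)) \<partial>?M) \<partial>(PiM I' (\<lambda>_. ?M)))"
    by (rule product_nn_integral_insert[OF fin(1,2)]) (use Nm in measurable)
  also have "\<dots> = (\<integral>\<^sup>+ x. 0 \<partial>(PiM I' (\<lambda>_. ?M)))"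
  proof (rule nn_integral_cong)
    fix x assume "x \<in> space (PiM I' (\<lambda>_. ?M))"
    have "(\<integral>\<^sup>+ y. indicator N (x(i := y)) \<partial>?M) = (\<integral>\<^sup>+ y. indicator N (x(i := y)) * indicator A y \<partial>lborel)"
      using A by (subst nn_integral_restrict_space) auto
    also have "\<dots> \<le> (\<integral>\<^sup>+ y. indicator {x j} y \<partial>lborel)"
      by (rule nn_integral_mono) (use fin assms in \<open>auto simp: N_def indicator_def\<close>)
    also have "\<dots> = 0" by (simp add: emeasure_lborel_countable)
    finally show "(\<integral>\<^sup>+ y. indicator N (x(i := y)) \<partial>?M) = 0" by simp
  qed
  also have "\<dots> = 0" by simp
  finally show ?thesis unfolding N_def .
qed

lemma ae_inj: "AE x in PiM {..<m} (\<lambda>_::nat. restrict_space lborel A). inj_on x {..<m}"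
proof -
  have "AE x in PiM {..<m} (\<lambda>_::nat. restrict_space lborel A). \<forall>i\<in>{..<m}. \<forall>j\<in>{..<m}. i \<noteq> j \<longrightarrow> x j \<noteq> x i"
  proof (intro AE_finite_allI finite_lessThan)
    fix i j assume ij: "i \<in> {..<m}" "j \<in> {..<m}"
    show "AE x in PiM {..<m} (\<lambda>_::nat. restrict_space lborel A). i \<noteq> j \<longrightarrow> x j \<noteq> x i"
    proof (cases "i = j")
      case False
      have "AE x in PiM {..<m} (\<lambda>_::nat. restrict_space lborel A). x j \<noteq> x i"
        by (rule AE_I'[OF null_setsI[OF null_eq meas_eq[OF ij]]]) (use ij False in auto)
      then show ?thesis by simp
    qed simp
  qed
  then show ?thesis by eventually_elim (unfold inj_on_def, metis lessThan_iff)
qed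

lemma int_prod:
  fixes f :: "real \<times> real \<Rightarrow> real"
  assumes f: "integrable (restrict_space lborel A) f"
  shows "(\<integral>x. (\<Prod>s\<in>x ` {..<m}. f s) \<partial>PiM {..<m} (\<lambda>_::nat. restrict_space lborel A))
     = (integral\<^sup>L (restrict_space lborel A) f) ^ m"
proof -
  interpret product_sigma_finite "\<lambda>_::nat. restrict_space lborel A" by (rule psf)
  let ?M = "restrict_space lborel A"
  let ?P = "PiM {..<m} (\<lambda>_::nat. ?M)"
  have fm: "f \<in> borel_measurable ?M" using f by auto
  have comp: "(\<lambda>x. f (x i)) \<in> borel_measurable ?P" if "i < m" for i
    using measurable_comp[OF measurable_component_singleton[of i "{..<m}" "\<lambda>_. ?M"] fm] that
    by (simp add: o_def)
  have predi: "{x \<in> space ?P. \<exists>j<i. x j = x i} \<in> sets ?P" if "i < m" for i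
  proof -
    have "{x \<in> space ?P. \<exists>j<i. x j = x i} = (\<Union>j\<in>{..<i}. {x \<in> space ?P. x j = x i})" by auto
    also have "\<dots> \<in> sets ?P" using that by (intro sets.finite_UN meas_eq) auto
    finally show ?thesis .
  qed
  have m1: "(\<lambda>x. (\<Prod>s\<in>x ` {..<m}. f s)) \<in> borel_measurable ?P"
  proof -
    have "(\<lambda>x. (\<Prod>i<m. if \<exists>j<i. x j = x i then 1 else f (x i))) \<in> borel_measurable ?P"
    proof (rule borel_measurable_prod[where f="\<lambda>i x. if \<exists>j<i. x j = x i then 1 else f (x i)"])
      fix i assume "i \<in> {..<m}"
      then show "(\<lambda>x. if \<exists>j<i. x j = x i then 1 else f (x i)) \<in> borel_measurable ?P"
        using \<open>i \<in> {..<m}\<close> by (intro measurable_If[OF measurable_const comp predi]) auto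
    qed
    then show ?thesis by (simp only: prod_image_first)
  qed
  have m2: "(\<lambda>x. (\<Prod>i<m. f (x i))) \<in> borel_measurable ?P"
    using comp by (intro borel_measurable_prod[where f="\<lambda>i x. f (x i)"]) auto
  have "(\<integral>x. (\<Prod>s\<in>x ` {..<m}. f s) \<partial>?P) = (\<integral>x. (\<Prod>i<m. f (x i)) \<partial>?P)"
    by (rule integral_cong_AE[OF m1 m2]) (use ae_inj in \<open>eventually_elim, simp add: prod.reindex\<close>)
  also have "\<dots> = (\<Prod>i<m. integral\<^sup>L ?M f)"
    by (rule product_integral_prod) (use f in auto)
  also have "\<dots> = (integral\<^sup>L ?M f) ^ m" by simp
  finally show ?thesis .
qed

lemma expect_formula:
  fixes l e h :: "real \<times> real \<Rightarrow> real" and \<gamma> :: real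
  assumes lpos: "\<forall>s\<in>A. l s > 0" and epos: "\<forall>s\<in>A. e s > 0"
    and hint: "set_integrable lborel A h"
    and hdef: "\<forall>s\<in>A. h s = e s powr \<gamma> * l s"
  shows "ppp_expect A l (\<lambda>\<xi>. ppp_density A e \<xi> powr \<gamma>)
     = exp (- \<gamma> * total_intensity A e - total_intensity A l + (LINT s:A|lborel. h s))"
proof -
  let ?M = "restrict_space lborel A"
  define c where "c = exp (- \<gamma> * total_intensity A e) * exp (- total_intensity A l)"
  define a where "a = (LINT s:A|lborel. h s)"
  have AM: "A \<inter> space lborel \<in> sets lborel" using A by simp
  have hM: "integrable ?M h" using hint unfolding set_integrable_def
    by (subst integrable_restrict_space[OF AM])
  have intM: "integral\<^sup>L ?M h = a" unfolding a_def set_lebesgue_integral_def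
    by (rule integral_restrict_space[OF AM])
  have termeq: "(\<integral>x. ppp_density A e (m, x ` {..<m}) powr \<gamma> * ppp_density A l (m, x ` {..<m})
        \<partial>PiM {..<m} (\<lambda>_::nat. ?M)) = c * a ^ m" for m
  proof -
    have "(\<integral>x. ppp_density A e (m, x ` {..<m}) powr \<gamma> * ppp_density A l (m, x ` {..<m})
        \<partial>PiM {..<m} (\<lambda>_::nat. ?M)) = (\<integral>x. c * (\<Prod>s\<in>x ` {..<m}. h s) \<partial>PiM {..<m} (\<lambda>_::nat. ?M))"
    proof (rule Bochner_Integration.integral_cong[OF refl])
      fix x assume "x \<in> space (PiM {..<m} (\<lambda>_::nat. ?M))"
      then have "\<forall>i<m. x i \<in> A" by (simp add: space_PiM space_restrict_space PiE_iff)
      then have sub: "x ` {..<m} \<subseteq> A" by blast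
      have pe: "(\<Prod>s\<in>x ` {..<m}. e s) \<ge> 0" by (intro prod_nonneg) (meson epos less_imp_le subsetD sub)
      have de: "ppp_density A e (m, x ` {..<m}) powr \<gamma> =
          exp (- total_intensity A e) powr \<gamma> * (\<Prod>s\<in>x ` {..<m}. e s) powr \<gamma>"
        unfolding ppp_density_def using pe by (simp add: powr_mult)
      also have "\<dots> = exp (- \<gamma> * total_intensity A e) * (\<Prod>s\<in>x ` {..<m}. e s powr \<gamma>)"
        by (rule powr_helper[of "total_intensity A e" \<gamma> e "x ` {..<m}"])
      finally have de2: "ppp_density A e (m, x ` {..<m}) powr \<gamma> = exp (- \<gamma> * total_intensity A e) * (\<Prod>s\<in>x ` {..<m}. e s powr \<gamma>)" .
      have dl: "ppp_density A l (m, x ` {..<m}) = exp (- total_intensity A l) * (\<Prod>s\<in>x ` {..<m}. l s)"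
        unfolding ppp_density_def snd_conv ..
      have "ppp_density A e (m, x ` {..<m}) powr \<gamma> * ppp_density A l (m, x ` {..<m})
         = c * ((\<Prod>s\<in>x ` {..<m}. e s powr \<gamma>) * (\<Prod>s\<in>x ` {..<m}. l s))"
        unfolding de2 dl c_def by (simp only: mult_ac)
      also have "\<dots> = c * (\<Prod>s\<in>x ` {..<m}. h s)"
      proof -
        have "e s powr \<gamma> * l s = h s" if "s \<in> x ` {..<m}" for s
        proof -
          have "s \<in> A" using sub that by (rule subsetD)
          then show ?thesis using hdef by simp
        qed
        then have "(\<Prod>s\<in>x ` {..<m}. e s powr \<gamma> * l s) = (\<Prod>s\<in>x ` {..<m}. h s)"
          by (rule prod.cong[OF refl])
        then show ?thesis by (simp only: prod.distrib[symmetric])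
      qed
      finally show "ppp_density A e (m, x ` {..<m}) powr \<gamma> * ppp_density A l (m, x ` {..<m})
         = c * (\<Prod>s\<in>x ` {..<m}. h s)" .
    qed
    also have "\<dots> = c * a ^ m"
      by (simp only: integral_mult_right_zero int_prod[OF hM] intM)
    finally show ?thesis .
  qed
  have "(\<lambda>m. c * (a ^ m /\<^sub>R fact m)) sums (c * exp a)"
    by (rule sums_mult[OF exp_converges])
  then have "(\<lambda>m. (1 / fact m) * (c * a ^ m)) sums (c * exp a)"
  proof -
    have "(\<lambda>m. c * (a ^ m /\<^sub>R fact m)) = (\<lambda>m. (1 / fact m) * (c * a ^ m))"
      by (rule ext) (simp add: field_simps)
    with \<open>(\<lambda>m. c * (a ^ m /\<^sub>R fact m)) sums (c * exp a)\<close> show ?thesis by (simp only:)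
  qed
  then have "ppp_expect A l (\<lambda>\<xi>. ppp_density A e \<xi> powr \<gamma>) = c * exp a"
    unfolding ppp_expect_def termeq by (rule sums_unique[symmetric])
  then show ?thesis unfolding c_def a_def by (simp only: exp_add[symmetric] diff_conv_add_uminus)
qed

end

theorem mainTheorem10:
  fixes A :: "(real \<times> real) set" and \<gamma> \<beta> :: real and l e :: "real \<times> real \<Rightarrow> real"
  assumes "A \<in> sets lborel"
    and "\<gamma> \<noteq> 0" and "\<gamma> \<noteq> -1"
    and "\<forall>s\<in>A. l s > 0" and "\<forall>s\<in>A. e s > 0"
    and "set_integrable lborel A l"
    and "set_integrable lborel A e"
    and "set_integrable lborel A (\<lambda>s. l s powr (\<gamma> + 1))"
    and "set_integrable lborel A (\<lambda>s. e s powr (\<gamma> + 1))"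
    and "set_integrable lborel A (\<lambda>s. l s * e s powr \<gamma>)"
    and "\<beta> = \<gamma>"
  shows "log_gamma_div \<gamma> A l e = beta_div \<beta> A l e"
proof -
  note A = assms(1)
  define H where "H = total_intensity A e"
  define L where "L = total_intensity A l"
  define I1 where "I1 = (LINT s:A|lborel. l s * e s powr \<gamma>)"
  define I2 where "I2 = (LINT s:A|lborel. e s powr (\<gamma> + 1))"
  define I3 where "I3 = (LINT s:A|lborel. l s powr (\<gamma> + 1))"
  have g1: "\<gamma> + 1 \<noteq> 0" using assms(3) by linarith
  have E1: "ppp_expect A l (\<lambda>\<xi>. ppp_density A e \<xi> powr \<gamma>) = exp (- \<gamma> * H - L + I1)"
    unfolding H_def L_def I1_def
    by (rule expect_formula[OF A assms(4,5,10)]) (simp add: mult.commute)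
  have E2: "ppp_expect A e (\<lambda>\<xi>. ppp_density A e \<xi> powr \<gamma>) = exp (- \<gamma> * H - H + I2)"
    unfolding H_def I2_def
    by (rule expect_formula[OF A assms(5,5,9)]) (use assms(5) in \<open>simp add: powr_add less_imp_le\<close>)
  have E3: "ppp_expect A l (\<lambda>\<xi>. ppp_density A l \<xi> powr \<gamma>) = exp (- \<gamma> * L - L + I3)"
    unfolding L_def I3_def
    by (rule expect_formula[OF A assms(4,4,8)]) (use assms(4) in \<open>simp add: powr_add less_imp_le\<close>)
  have lhs: "log_gamma_div \<gamma> A l e = - (1 / \<gamma>) * (I1 - \<gamma> / (\<gamma> + 1) * I2 - 1 / (\<gamma> + 1) * I3)"
  proof -
    have "log_gamma_div \<gamma> A l e = - (1 / \<gamma>) * ((- \<gamma> * H - L + I1) - (- \<gamma> * H - H + I2) * (\<gamma> / (\<gamma> + 1))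
        - (- \<gamma> * L - L + I3) * (1 / (\<gamma> + 1)))"
      unfolding log_gamma_div_def E1 E2 E3
      by (simp add: exp_powr_real exp_add[symmetric] exp_diff[symmetric] del: exp_add exp_diff)
    also have "\<dots> = - (1 / \<gamma>) * (I1 - \<gamma> / (\<gamma> + 1) * I2 - 1 / (\<gamma> + 1) * I3)"
      using g1 by (simp add: field_simps)
    finally show ?thesis .
  qed
  have "(LINT s:A|lborel. (l s * e s powr \<beta> - \<beta> / (\<beta> + 1) * e s powr (\<beta> + 1)
                                     - 1 / (\<beta> + 1) * l s powr (\<beta> + 1)))
     = I1 - \<gamma> / (\<gamma> + 1) * I2 - 1 / (\<gamma> + 1) * I3"
    unfolding I1_def I2_def I3_def assms(11)
    using assms(8,9,10) by (subst set_integral_diff(2), auto)+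
  then show ?thesis unfolding lhs beta_div_def assms(11) by simp
qed

end
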